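(* For each irreducible representation $\alpha$ of $G^n$, let $\widetilde{\mathcal H}^\alpha_r$ be a Hilbert space of dimension $n_\alpha$ with orthonormal basis $\{|\alpha i\rangle_r\}_{i=1}^{n_\alpha}$, and let $\widetilde{\mathcal H}^{\bar\alpha}_{\bar r}$ be a Hilbert space of dimension $\bar n_{\bar\alpha}$ with orthonormal basis $\{|\bar\alpha j\rangle_{\bar r}\}_{j=1}^{\bar n_{\bar\alpha}}$. Define $$W:\widetilde{\mathcal H}\to\bigoplus_\alpha\widetilde{\mathcal H}^\alpha_r\otimes\widetilde{\mathcal H}^{\bar\alpha}_{\bar r},\qquad W\Big(\sum_{\alpha ijk}\widetilde\psi_{\alpha ij}|\alpha ik\rangle_r|\bar\alpha jk\rangle_{\bar r}\Big)=\sum_{\alpha ij}\sqrt{d_\alpha}\,\widetilde\psi_{\alpha ij}\,|\alpha i\rangle_r|\bar\alpha j\rangle_{\bar r}.$$ Then: - $W$ is a unitary isomorphism. - Under conjugation by $W$ (with elements of $\widetilde{\mathcal A}_r$, $\widetilde{\mathcal A}_{\bar r}$ restricted to $\widetilde{\mathcal H}$), one has $$W\widetilde{\mathcal A}_rW^{\dagger}=\bigoplus_\alpha\mathcal B(\widetilde{\mathcal H}^\alpha_r)\otimes1^{\bar\alpha}_{\bar r}\quad\text{and}\quad W\widetilde{\mathcal A}_{\bar r}W^\dagger=\bigoplus_\alpha1^\alpha_r\otimes\mathcal B(\widetilde{\mathcal H}^{\bar\alpha}_{\bar r}).$$ - Explicitly, the element of $\widetilde{\mathcal A}_r$ with coefficients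 $\widetilde{\mathcal O}_{\alpha ij}$, namely $\sum_{\alpha ii'jk\ell}\widetilde{\mathcal O}_{\alpha ij}|\alpha ik\rangle_r\langle\alpha j\ell|\otimes|\bar\alpha i'k\rangle_{\bar r}\langle\bar\alpha i'\ell|$, is mapped to $\bigoplus_\alpha\big(\sum_{ij}d_\alpha\widetilde{\mathcal O}_{\alpha ij}|\alpha i\rangle_r\langle\alpha j|\big)\otimes 1^{\bar\alpha}_{\bar r}$.
   Context: Setup. Let $G$ be a compact Lie group (possibly finite) with normalized Haar measure $dg$ ($\int dg=1$). For each irreducible unitary representation $\alpha$ fix unitary matrices $D^\alpha(g)$ of dimension $d_\alpha$; the conjugate representation is $D^{\bar\alpha}=\overline{D^\alpha}$. Let $\Lambda=(V,E)$ be a finite directed graph; loops and multiple edges are allowed. Each edge $e$ carries $\mathcal H_e=L^2(G)$ with unitaries $L_e(g)|h\rangle=|gh\rangle$ and $R_e(g^{-1})|h\rangle=|hg^{-1}\rangle$. Each vertex $v$ carries a Hilbert space $\mathcal H_v$ with a unitary representation $U_v$ of $G$. All these spaces are taken finite-dimensional by truncating to finitely many irreducible isotypic sectors, invariant under the group actions. The pre-gauged space is $\mathcal H=\bigotimes_v\mathcal H_v\otimes\bigotimes_e\mathcal H_e$. The gauge transformation at $v$ is $A_v(g)=U_v(g)\prod_{e\in E^-(v)}L_e(g)\prod_{e\in E^+(v)}R_e(g^{-1})$, where $E^-(v)$ is the set of edges oriented out of $v$ and $E^+(v)$ the set of edges oriented into $v$. Set $\Pi_v=\int dg\,A_v(g)$,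 $\Pi_{GI}=\prod_v\Pi_v$ and $\widetilde{\mathcal H}=\Pi_{GI}\mathcal H$. Subregions. A subregion $r$ is an arbitrary subset of $V\cup E$, and $\bar r$ is its complement. Let $\mathcal H_r=\bigotimes_{x\in r}\mathcal H_x$, $\mathcal A_r=\mathcal B(\mathcal H_r)\otimes1_{\bar r}$ and $\mathcal A_{\bar r}=1_r\otimes\mathcal B(\mathcal H_{\bar r})$. Define $\widetilde{\mathcal A}_r=\Pi_{GI}\mathcal A_r\Pi_{GI}$ and $\widetilde{\mathcal A}_{\bar r}=\Pi_{GI}\mathcal A_{\bar r}\Pi_{GI}$. Let $V_r$ be the set of vertices $v$ with $v$ and all its incident edges in $r$; define $V_{\bar r}$ likewise; let $V_c=V\setminus(V_r\cup V_{\bar r})=\{v_1,\dots,v_n\}$. Put $\hat{\mathcal H}_r=\prod_{v\in V_r}\Pi_v\,\mathcal H_r$ and $\hat{\mathcal H}_{\bar r}=\prod_{v\in V_{\bar r}}\Pi_v\,\mathcal H_{\bar r}$. For $v_i\in V_c$ write $A_{v_i}(g)=A_{v_i,r}(g)A_{v_i,\bar r}(g)$, splitting the tensor factors acting on $r$ and $\bar r$. For $g\in G^n$ set $A_r(g)=\prod_iA_{v_i,r}(g_i)$ and $A_{\bar r}(g)=\prod_i A_{v_i,\bar r}(g_i)$, representations of $G^n$ on $\hat{\mathcal H}_r$ and $\hat{\mathcal H}_{\bar r}$. Irreducible representations of $G^n$ are $\alpha=\alpha_1\boxtimes\cdots\boxtimes\alpha_n$, with $d_\alpha=\prod d_{\alpha_i}$.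 Orthonormal bases: $\{|\alpha ik\rangle_r\}$ of $\hat{\mathcal H}_r$, with $1\le i\le n_\alpha$ (possibly $0$) and $1\le k\le d_\alpha$, such that $A_r(g)|\alpha ik\rangle_r=\sum_{k'}D^\alpha_{k'k}(g)|\alpha ik'\rangle_r$; and $\{|\bar\beta j\ell\rangle_{\bar r}\}$ of $\hat{\mathcal H}_{\bar r}$, with $1\le j\le\bar n_{\bar\beta}$, such that $A_{\bar r}(g)|\bar\beta j\ell\rangle_{\bar r}=\sum_{\ell'}D^{\bar\beta}_{\ell'\ell}(g)|\bar\beta j\ell'\rangle_{\bar r}$. It is known (Lemma 1 of the setting) that every element of $\widetilde{\mathcal H}$ has the form $\sum_{\alpha ijk}\widetilde\psi_{\alpha ij}|\alpha ik\rangle_r|\bar\alpha jk\rangle_{\bar r}$ with $i\le n_\alpha$, $j\le\bar n_{\bar\alpha}$, $k\le d_\alpha$. Also, $\widetilde{\mathcal A}_r$ consists exactly of the operators $\sum_{\alpha ii'jk\ell}\widetilde{\mathcal O}_{\alpha ij}|\alpha ik\rangle_r\langle\alpha j\ell|\otimes|\bar\alpha i'k\rangle_{\bar r}\langle\bar\alpha i'\ell|$, and these annihilate $\widetilde{\mathcal H}^\perp$. *)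

theory Defs
  imports Complex_Main "HOL-Library.FuncSet"
begin

text \<open>Labels of type 'a stand for the finitely many
  irreducible representations alpha of G^n retained after truncation (set A); the label alpha
  on the r-bar side stands for the conjugate irrep.  d a = d_alpha, n a = n_alpha,
  nb a = bar n_{bar alpha}.  Indices are 0-based.  A vector of hat H_r (x) hat H_rbar is given by
  its coefficients v (a,i,k) (b,j,l) with respect to the orthonormal product basis
  |a i k>_r |bar b j l>_rbar.\<close>

definition Ir :: "'a set \<Rightarrow> ('a \<Rightarrow> nat) \<Rightarrow> ('a \<Rightarrow> nat) \<Rightarrow> ('a \<times> nat \<times> nat) set" where
  "Ir A d n = {(a, i, k). a \<in> A \<and> i < n a \<and> k < d a}"

definition Irb :: "'a set \<Rightarrow> ('a \<Rightarrow> nat) \<Rightarrow> ('a \<Rightarrow> nat) \<Rightarrow> ('a \<times> nat \<times> nat) set" where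
  "Irb A d nb = {(b, j, l). b \<in> A \<and> j < nb b \<and> l < d b}"

type_synonym 'a pvec = "'a \<times> nat \<times> nat \<Rightarrow> 'a \<times> nat \<times> nat \<Rightarrow> complex"
type_synonym 'a tvec = "'a \<Rightarrow> nat \<Rightarrow> nat \<Rightarrow> complex"

definition inner_pre :: "'a set \<Rightarrow> ('a \<Rightarrow> nat) \<Rightarrow> ('a \<Rightarrow> nat) \<Rightarrow> ('a \<Rightarrow> nat)
    \<Rightarrow> 'a pvec \<Rightarrow> 'a pvec \<Rightarrow> complex" where
  "inner_pre A d n nb u v = (\<Sum>(x, y) \<in> Ir A d n \<times> Irb A d nb. cnj (u x y) * v x y)"

definition embed :: "'a set \<Rightarrow> ('a \<Rightarrow> nat) \<Rightarrow> ('a \<Rightarrow> nat) \<Rightarrow> ('a \<Rightarrow> nat)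
    \<Rightarrow> 'a tvec \<Rightarrow> 'a pvec" where
  "embed A d n nb psi = (\<lambda>(a, i, k) (b, j, l).
     if a = b \<and> k = l \<and> a \<in> A \<and> i < n a \<and> j < nb a \<and> k < d a then psi a i j else 0)"

text \<open>The gauge-invariant space tilde H (Lemma 1).\<close>
definition Htil :: "'a set \<Rightarrow> ('a \<Rightarrow> nat) \<Rightarrow> ('a \<Rightarrow> nat) \<Rightarrow> ('a \<Rightarrow> nat) \<Rightarrow> 'a pvec set" where
  "Htil A d n nb = range (embed A d n nb)"

text \<open>Target space bigoplus_a tilde H^a_r (x) tilde H^{bar a}_rbar, coefficients w a i j
  with respect to the orthonormal basis |a i>_r |bar a j>_rbar.\<close>
definition Tidx :: "'a set \<Rightarrow> ('a \<Rightarrow> nat) \<Rightarrow> ('a \<Rightarrow> nat) \<Rightarrow> ('a \<times> nat \<times> nat) set" where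
  "Tidx A n nb = {(a, i, j). a \<in> A \<and> i < n a \<and> j < nb a}"

definition Tsp :: "'a set \<Rightarrow> ('a \<Rightarrow> nat) \<Rightarrow> ('a \<Rightarrow> nat) \<Rightarrow> 'a tvec set" where
  "Tsp A n nb = {w. \<forall>a i j. (a, i, j) \<notin> Tidx A n nb \<longrightarrow> w a i j = 0}"

definition inner_T :: "'a set \<Rightarrow> ('a \<Rightarrow> nat) \<Rightarrow> ('a \<Rightarrow> nat) \<Rightarrow> 'a tvec \<Rightarrow> 'a tvec \<Rightarrow> complex" where
  "inner_T A n nb u v = (\<Sum>(a, i, j) \<in> Tidx A n nb. cnj (u a i j) * v a i j)"

definition Wmap :: "'a set \<Rightarrow> ('a \<Rightarrow> nat) \<Rightarrow> ('a \<Rightarrow> nat) \<Rightarrow> ('a \<Rightarrow> nat) \<Rightarrow> 'a pvec \<Rightarrow> 'a tvec" where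
  "Wmap A d n nb v = (\<lambda>a i j. if a \<in> A \<and> i < n a \<and> j < nb a
      then complex_of_real (sqrt (real (d a))) * v (a, i, 0) (a, j, 0) else 0)"

text \<open>The element of tilde A_r with coefficients O:
  sum O_{a i j} |a i k>_r<a j l| (x) |bar a i' k>_rbar<bar a i' l|.\<close>
definition op_r :: "'a set \<Rightarrow> ('a \<Rightarrow> nat) \<Rightarrow> ('a \<Rightarrow> nat) \<Rightarrow> ('a \<Rightarrow> nat)
    \<Rightarrow> 'a tvec \<Rightarrow> 'a pvec \<Rightarrow> 'a pvec" where
  "op_r A d n nb Oc v = (\<lambda>(a, i, k) (b, i', k2).
     if a = b \<and> k = k2 \<and> a \<in> A \<and> i < n a \<and> i' < nb a \<and> k < d a
     then (\<Sum>j < n a. \<Sum>l < d a. Oc a i j * v (a, j, l) (a, i', l)) else 0)"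

text \<open>The element of tilde A_rbar with coefficients O:
  sum O_{a i j} |a i' k>_r<a i' l| (x) |bar a i k>_rbar<bar a j l|.\<close>
definition op_rb :: "'a set \<Rightarrow> ('a \<Rightarrow> nat) \<Rightarrow> ('a \<Rightarrow> nat) \<Rightarrow> ('a \<Rightarrow> nat)
    \<Rightarrow> 'a tvec \<Rightarrow> 'a pvec \<Rightarrow> 'a pvec" where
  "op_rb A d n nb Oc v = (\<lambda>(a, i', k) (b, i, k2).
     if a = b \<and> k = k2 \<and> a \<in> A \<and> i' < n a \<and> i < nb a \<and> k < d a
     then (\<Sum>j < nb a. \<Sum>l < d a. Oc a i j * v (a, i', l) (a, j, l)) else 0)"

definition Atil_r :: "'a set \<Rightarrow> ('a \<Rightarrow> nat) \<Rightarrow> ('a \<Rightarrow> nat) \<Rightarrow> ('a \<Rightarrow> nat) \<Rightarrow> ('a pvec \<Rightarrow> 'a pvec) set" where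
  "Atil_r A d n nb = range (op_r A d n nb)"

definition Atil_rb :: "'a set \<Rightarrow> ('a \<Rightarrow> nat) \<Rightarrow> ('a \<Rightarrow> nat) \<Rightarrow> ('a \<Rightarrow> nat) \<Rightarrow> ('a pvec \<Rightarrow> 'a pvec) set" where
  "Atil_rb A d n nb = range (op_rb A d n nb)"

definition blk_r :: "'a set \<Rightarrow> ('a \<Rightarrow> nat) \<Rightarrow> ('a \<Rightarrow> nat) \<Rightarrow> 'a tvec \<Rightarrow> 'a tvec \<Rightarrow> 'a tvec" where
  "blk_r A n nb M w = (\<lambda>a i j. if a \<in> A \<and> i < n a \<and> j < nb a
      then (\<Sum>i2 < n a. M a i i2 * w a i2 j) else 0)"

definition blk_rb :: "'a set \<Rightarrow> ('a \<Rightarrow> nat) \<Rightarrow> ('a \<Rightarrow> nat) \<Rightarrow> 'a tvec \<Rightarrow> 'a tvec \<Rightarrow> 'a tvec" where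
  "blk_rb A n nb M w = (\<lambda>a i j. if a \<in> A \<and> i < n a \<and> j < nb a
      then (\<Sum>j2 < nb a. M a j j2 * w a i j2) else 0)"

end

theory Submission imports Defs begin

lemma W_embed:
  assumes "\<forall>a\<in>A. 0 < d a"
  shows "Wmap A d n nb (embed A d n nb psi) = (\<lambda>a i j. if a \<in> A \<and> i < n a \<and> j < nb a
                then complex_of_real (sqrt (real (d a))) * psi a i j else 0)"
  using assms by (auto simp: Wmap_def embed_def fun_eq_iff)

lemma embed_app: "embed A d n nb psi (a,i,k) (b,j,l) =
   (if a = b \<and> k = l \<and> a \<in> A \<and> i < n a \<and> j < nb a \<and> k < d a then psi a i j else 0)"
  by (simp add: embed_def)

lemma op_r_embed:
  "op_r A d n nb Oc (embed A d n nb psi) =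
   embed A d n nb (\<lambda>a i i'. of_nat (d a) * (\<Sum>j < n a. Oc a i j * psi a j i'))"
proof (intro ext)
  fix x y :: "'a \<times> nat \<times> nat"
  obtain a i k where x: "x = (a,i,k)" by (cases x) auto
  obtain b i' k2 where y: "y = (b,i',k2)" by (cases y) auto
  have "(\<Sum>j < n a. \<Sum>l < d a. Oc a i j * embed A d n nb psi (a, j, l) (a, i', l))
      = of_nat (d a) * (\<Sum>j < n a. Oc a i j * psi a j i')" if "a \<in> A" "i' < nb a"
  proof -
    have "(\<Sum>j < n a. \<Sum>l < d a. Oc a i j * embed A d n nb psi (a, j, l) (a, i', l))
        = (\<Sum>j < n a. \<Sum>l < d a. Oc a i j * psi a j i')"
      by (intro sum.cong refl) (simp add: embed_app that)
    also have "\<dots> = of_nat (d a) * (\<Sum>j < n a. Oc a i j * psi a j i')"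
      by (simp add: sum_distrib_left)
    finally show ?thesis .
  qed
  then show "op_r A d n nb Oc (embed A d n nb psi) x y = embed A d n nb (\<lambda>a i i'. of_nat (d a) * (\<Sum>j < n a. Oc a i j * psi a j i')) x y"
    by (auto simp: x y op_r_def embed_app)
qed

lemma op_rb_embed:
  "op_rb A d n nb Oc (embed A d n nb psi) =
   embed A d n nb (\<lambda>a i' i. of_nat (d a) * (\<Sum>j < nb a. Oc a i j * psi a i' j))"
proof (intro ext)
  fix x y :: "'a \<times> nat \<times> nat"
  obtain a i' k where x: "x = (a,i',k)" by (cases x) auto
  obtain b i k2 where y: "y = (b,i,k2)" by (cases y) auto
  have "(\<Sum>j < nb a. \<Sum>l < d a. Oc a i j * embed A d n nb psi (a, i', l) (a, j, l))
      = of_nat (d a) * (\<Sum>j < nb a. Oc a i j * psi a i' j)" if "a \<in> A" "i' < n a"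
  proof -
    have "(\<Sum>j < nb a. \<Sum>l < d a. Oc a i j * embed A d n nb psi (a, i', l) (a, j, l))
        = (\<Sum>j < nb a. \<Sum>l < d a. Oc a i j * psi a i' j)"
      by (intro sum.cong refl) (simp add: embed_app that)
    also have "\<dots> = of_nat (d a) * (\<Sum>j < nb a. Oc a i j * psi a i' j)"
      by (simp add: sum_distrib_left)
    finally show ?thesis .
  qed
  then show "op_rb A d n nb Oc (embed A d n nb psi) x y = embed A d n nb (\<lambda>a i' i. of_nat (d a) * (\<Sum>j < nb a. Oc a i j * psi a i' j)) x y"
    by (auto simp: x y op_rb_def embed_app)
qed

lemma Ir_Sigma: "Ir A d n = Sigma A (\<lambda>a. {..<n a} \<times> {..<d a})"
  by (auto simp: Ir_def)
lemma Irb_Sigma: "Irb A d nb = Sigma A (\<lambda>a. {..<nb a} \<times> {..<d a})"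
  by (auto simp: Irb_def)
lemma Tidx_Sigma: "Tidx A n nb = Sigma A (\<lambda>a. {..<n a} \<times> {..<nb a})"
  by (auto simp: Tidx_def)

lemma sum_Sig3:
  fixes m e :: "'a \<Rightarrow> nat"
  assumes "finite A"
  shows "(\<Sum>x\<in>Sigma A (\<lambda>a. {..<m a} \<times> {..<e a}). F x) = (\<Sum>a\<in>A. \<Sum>i<m a. \<Sum>k<e a. F (a,i,k))"
proof -
  have "(\<Sum>x\<in>Sigma A (\<lambda>a. {..<m a} \<times> {..<e a}). F x) = (\<Sum>a\<in>A. \<Sum>y\<in>{..<m a} \<times> {..<e a}. F (a,y))"
  proof -
    have fin: "\<forall>x\<in>A. finite ({..<m x} \<times> {..<e x})" by (simp add: finite_cartesian_product)
    show ?thesis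
      using sum.Sigma[of A "\<lambda>a. {..<m a} \<times> {..<e a}" "\<lambda>a y. F (a,y)", OF assms fin]
      by (simp add: case_prod_unfold)
  qed
  also have "\<dots> = (\<Sum>a\<in>A. \<Sum>i<m a. \<Sum>k<e a. F (a,i,k))"
    by (simp add: sum.cartesian_product)
  finally show ?thesis .
qed

lemma inner_embed:
  assumes "finite A"
  shows "inner_pre A d n nb (embed A d n nb p) (embed A d n nb q) =
    (\<Sum>(a,i,j)\<in>Tidx A n nb. of_nat (d a) * (cnj (p a i j) * q a i j))"
proof -
  let ?f = "\<lambda>a i k b j l. cnj (embed A d n nb p (a,i,k) (b,j,l)) * embed A d n nb q (a,i,k) (b,j,l)"
  have "inner_pre A d n nb (embed A d n nb p) (embed A d n nb q)
      = (\<Sum>a\<in>A. \<Sum>i<n a. \<Sum>k<d a. \<Sum>b\<in>A. \<Sum>j<nb b. \<Sum>l<d b. ?f a i k b j l)"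
    unfolding inner_pre_def Ir_Sigma Irb_Sigma
    using assms
    by (simp add: sum.cartesian_product[symmetric] sum_Sig3[OF assms])
  also have "\<dots> = (\<Sum>a\<in>A. \<Sum>i<n a. \<Sum>k<d a. \<Sum>j<nb a. cnj (p a i j) * q a i j)"
  proof (intro sum.cong refl)
    fix a i k assume a: "a \<in> A" and i: "i \<in> {..<n a}" and k: "k \<in> {..<d a}"
    have "(\<Sum>b\<in>A. \<Sum>j<nb b. \<Sum>l<d b. ?f a i k b j l)
        = (\<Sum>b\<in>A. if b = a then (\<Sum>j<nb a. cnj (p a i j) * q a i j) else 0)"
    proof (intro sum.cong refl)
      fix b assume "b \<in> A"
      show "(\<Sum>j<nb b. \<Sum>l<d b. ?f a i k b j l) = (if b = a then (\<Sum>j<nb a. cnj (p a i j) * q a i j) else 0)"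
      proof (cases "b = a")
        case True
        have "(\<Sum>j<nb b. \<Sum>l<d b. ?f a i k b j l) = (\<Sum>j<nb a. \<Sum>l<d a. if l = k then cnj (p a i j) * q a i j else 0)"
          using a i k True by (intro sum.cong refl) (auto simp: embed_app)
        also have "\<dots> = (\<Sum>j<nb a. cnj (p a i j) * q a i j)"
          using k by (simp add: sum.delta)
        finally show ?thesis using True by simp
      next
        case False
        then show ?thesis by (simp add: embed_app)
      qed
    qed
    also have "\<dots> = (\<Sum>j<nb a. cnj (p a i j) * q a i j)"
      using assms a by (simp add: sum.delta')
    finally show "(\<Sum>b\<in>A. \<Sum>j<nb b. \<Sum>l<d b. ?f a i k b j l) = (\<Sum>j<nb a. cnj (p a i j) * q a i j)" .
  qed
  also have "\<dots> = (\<Sum>a\<in>A. \<Sum>i<n a. \<Sum>j<nb a. of_nat (d a) * (cnj (p a i j) * q a i j))"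
    by (simp add: sum_distrib_left)
  also have "\<dots> = (\<Sum>(a,i,j)\<in>Tidx A n nb. of_nat (d a) * (cnj (p a i j) * q a i j))"
    unfolding Tidx_Sigma using assms
    by (simp add: sum_Sig3 split_def)
  finally show ?thesis .
qed

theorem proposition6:
  fixes A :: "'a set" and d n nb :: "'a \<Rightarrow> nat"
  assumes "finite A" and "\<forall>a\<in>A. 0 < d a"
  defines "W \<equiv> Wmap A d n nb"
      and "Winv \<equiv> the_inv_into (Htil A d n nb) (Wmap A d n nb)"
  shows
    "(\<forall>psi. W (embed A d n nb psi) = (\<lambda>a i j. if a \<in> A \<and> i < n a \<and> j < nb a
                then complex_of_real (sqrt (real (d a))) * psi a i j else 0))
   \<and> inj_on W (Htil A d n nb)
   \<and> W ` Htil A d n nb = Tsp A n nb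
   \<and> (\<forall>u \<in> Htil A d n nb. \<forall>v \<in> Htil A d n nb.
        inner_T A n nb (W u) (W v) = inner_pre A d n nb u v)
   \<and> (\<forall>X \<in> Atil_r A d n nb. X ` Htil A d n nb \<subseteq> Htil A d n nb)
   \<and> (\<forall>X \<in> Atil_rb A d n nb. X ` Htil A d n nb \<subseteq> Htil A d n nb)
   \<and> (\<lambda>X. restrict (W \<circ> X \<circ> Winv) (Tsp A n nb)) ` Atil_r A d n nb
       = (\<lambda>M. restrict (blk_r A n nb M) (Tsp A n nb)) ` UNIV
   \<and> (\<lambda>X. restrict (W \<circ> X \<circ> Winv) (Tsp A n nb)) ` Atil_rb A d n nb
       = (\<lambda>M. restrict (blk_rb A n nb M) (Tsp A n nb)) ` UNIV
   \<and> (\<forall>Oc. \<forall>w \<in> Tsp A n nb. W (op_r A d n nb Oc (Winv w))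
        = blk_r A n nb (\<lambda>a i j. of_nat (d a) * Oc a i j) w)"
proof -
  note dpos = assms(2)
  let ?E = "embed A d n nb"
  define Psi where "Psi w = (\<lambda>a i j. w a i j / complex_of_real (sqrt (real (d a))))" for w :: "'a tvec"
  have WE: "W (?E psi) = (\<lambda>a i j. if a \<in> A \<and> i < n a \<and> j < nb a
                then complex_of_real (sqrt (real (d a))) * psi a i j else 0)" for psi
    unfolding W_def by (rule W_embed[OF dpos])
  have sq0: "complex_of_real (sqrt (real (d a))) \<noteq> 0" if "a \<in> A" for a
    using dpos that by simp
  have WPsi: "W (?E (Psi w)) = w" if "w \<in> Tsp A n nb" for w
  proof (intro ext)
    fix a i j
    show "W (?E (Psi w)) a i j = w a i j"
      using that sq0[of a] unfolding WE Psi_def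
      by (auto simp: Tsp_def Tidx_def)
  qed
  have injW: "inj_on W (Htil A d n nb)"
  proof (rule inj_onI)
    fix u v assume "u \<in> Htil A d n nb" "v \<in> Htil A d n nb" and eq: "W u = W v"
    then obtain p q where u: "u = ?E p" and v: "v = ?E q" by (auto simp: Htil_def)
    have pq: "p a i j = q a i j" if "a \<in> A" "i < n a" "j < nb a" for a i j
    proof -
      have "W u a i j = W v a i j" using eq by simp
      then show ?thesis using that sq0[of a] unfolding u v WE by simp
    qed
    show "u = v" unfolding u v
      by (intro ext) (auto simp: embed_def pq split: prod.splits)
  qed
  have img: "W ` Htil A d n nb = Tsp A n nb"
  proof
    show "W ` Htil A d n nb \<subseteq> Tsp A n nb"
      by (auto simp: Htil_def WE Tsp_def Tidx_def)
    show "Tsp A n nb \<subseteq> W ` Htil A d n nb"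
    proof
      fix w assume "w \<in> Tsp A n nb"
      then have "w = W (?E (Psi w))" using WPsi by simp
      then show "w \<in> W ` Htil A d n nb" by (auto simp: Htil_def)
    qed
  qed
  have Winv: "Winv w = ?E (Psi w)" if "w \<in> Tsp A n nb" for w
  proof -
    have "Winv (W (?E (Psi w))) = ?E (Psi w)"
      unfolding Winv_def using the_inv_into_f_f[OF injW[unfolded W_def]] by (simp add: Htil_def W_def)
    then show ?thesis using WPsi[OF that] by simp
  qed
  have inner: "inner_T A n nb (W u) (W v) = inner_pre A d n nb u v"
    if uv: "u \<in> Htil A d n nb" "v \<in> Htil A d n nb" for u v
  proof -
    obtain p q where u: "u = ?E p" and v: "v = ?E q" using uv by (auto simp: Htil_def)
    have "inner_T A n nb (W u) (W v) = (\<Sum>(a,i,j)\<in>Tidx A n nb. of_nat (d a) * (cnj (p a i j) * q a i j))"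
      unfolding inner_T_def u v WE
    proof (intro sum.cong refl)
      fix x assume "x \<in> Tidx A n nb"
      then obtain a i j where x: "x = (a,i,j)" "a \<in> A" "i < n a" "j < nb a" by (auto simp: Tidx_def)
      have s: "complex_of_real (sqrt (real (d a))) * complex_of_real (sqrt (real (d a))) = of_nat (d a)"
        proof - have "sqrt (real (d a)) * sqrt (real (d a)) = real (d a)" by simp
          then show ?thesis by (metis of_real_mult of_real_of_nat_eq) qed
      show "(case x of (a, i, j) \<Rightarrow> cnj (if a \<in> A \<and> i < n a \<and> j < nb a then complex_of_real (sqrt (real (d a))) * p a i j else 0) *
                 (if a \<in> A \<and> i < n a \<and> j < nb a then complex_of_real (sqrt (real (d a))) * q a i j else 0))
          = (case x of (a, i, j) \<Rightarrow> of_nat (d a) * (cnj (p a i j) * q a i j))"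
      proof -
        let ?c = "complex_of_real (sqrt (real (d a)))"
        have "cnj (?c * p a i j) * (?c * q a i j) = (?c * ?c) * (cnj (p a i j) * q a i j)"
          by (simp only: complex_cnj_mult complex_cnj_complex_of_real mult_ac)
        then show ?thesis using x s by simp
      qed
    qed
    also have "\<dots> = inner_pre A d n nb u v" unfolding u v by (rule inner_embed[OF assms(1), symmetric])
    finally show ?thesis .
  qed
  have pres_r: "X ` Htil A d n nb \<subseteq> Htil A d n nb" if hX: "X \<in> Atil_r A d n nb" for X
  proof
    fix y assume "y \<in> X ` Htil A d n nb"
    then obtain Oc psi where "X = op_r A d n nb Oc" "y = X (?E psi)" using hX by (auto simp: Atil_r_def Htil_def)
    then show "y \<in> Htil A d n nb" unfolding Htil_def by (simp only: op_r_embed rangeI)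
  qed
  have pres_rb: "X ` Htil A d n nb \<subseteq> Htil A d n nb" if hX: "X \<in> Atil_rb A d n nb" for X
  proof
    fix y assume "y \<in> X ` Htil A d n nb"
    then obtain Oc psi where "X = op_rb A d n nb Oc" "y = X (?E psi)" using hX by (auto simp: Atil_rb_def Htil_def)
    then show "y \<in> Htil A d n nb" unfolding Htil_def by (simp only: op_rb_embed rangeI)
  qed
  have conj_r: "W (op_r A d n nb Oc (Winv w)) = blk_r A n nb (\<lambda>a i j. of_nat (d a) * Oc a i j) w"
    if "w \<in> Tsp A n nb" for Oc w
  proof (intro ext)
    fix a i j
    show "W (op_r A d n nb Oc (Winv w)) a i j = blk_r A n nb (\<lambda>a i j. of_nat (d a) * Oc a i j) w a i j"
    proof (cases "a \<in> A \<and> i < n a \<and> j < nb a")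
      case True
      let ?c = "complex_of_real (sqrt (real (d a)))"
      have e1: "(\<Sum>j'<n a. Oc a i j' * (w a j' j / ?c)) = (\<Sum>j'<n a. Oc a i j' * w a j' j) / ?c"
        by (simp add: sum_divide_distrib)
      have "?c * (of_nat (d a) * (\<Sum>j'<n a. Oc a i j' * (w a j' j / ?c)))
          = of_nat (d a) * (\<Sum>j'<n a. Oc a i j' * w a j' j)"
        unfolding e1 using sq0[of a] True by simp
      also have "\<dots> = (\<Sum>j'<n a. of_nat (d a) * Oc a i j' * w a j' j)"
        by (simp add: sum_distrib_left mult.assoc)
      moreover have "W (op_r A d n nb Oc (Winv w)) a i j = ?c * (of_nat (d a) * (\<Sum>j'<n a. Oc a i j' * (w a j' j / ?c)))"
        unfolding Winv[OF that] op_r_embed WE Psi_def using True by simp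
      moreover have "blk_r A n nb (\<lambda>a i j. of_nat (d a) * Oc a i j) w a i j = (\<Sum>j'<n a. of_nat (d a) * Oc a i j' * w a j' j)"
        unfolding blk_r_def using True by simp
      ultimately show ?thesis by simp
    next
      case False
      then show ?thesis unfolding Winv[OF that] op_r_embed WE blk_r_def by (simp only: if_not_P[OF False] if_False)
    qed
  qed
  have conj_rb: "W (op_rb A d n nb Oc (Winv w)) = blk_rb A n nb (\<lambda>a i j. of_nat (d a) * Oc a i j) w"
    if "w \<in> Tsp A n nb" for Oc w
  proof (intro ext)
    fix a i j
    show "W (op_rb A d n nb Oc (Winv w)) a i j = blk_rb A n nb (\<lambda>a i j. of_nat (d a) * Oc a i j) w a i j"
    proof (cases "a \<in> A \<and> i < n a \<and> j < nb a")
      case True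
      let ?c = "complex_of_real (sqrt (real (d a)))"
      have e1: "(\<Sum>j'<nb a. Oc a j j' * (w a i j' / ?c)) = (\<Sum>j'<nb a. Oc a j j' * w a i j') / ?c"
        by (simp add: sum_divide_distrib)
      have "?c * (of_nat (d a) * (\<Sum>j'<nb a. Oc a j j' * (w a i j' / ?c)))
          = of_nat (d a) * (\<Sum>j'<nb a. Oc a j j' * w a i j')"
        unfolding e1 using sq0[of a] True by simp
      also have "\<dots> = (\<Sum>j'<nb a. of_nat (d a) * Oc a j j' * w a i j')"
        by (simp add: sum_distrib_left mult.assoc)
      moreover have "W (op_rb A d n nb Oc (Winv w)) a i j = ?c * (of_nat (d a) * (\<Sum>j'<nb a. Oc a j j' * (w a i j' / ?c)))"
        unfolding Winv[OF that] op_rb_embed WE Psi_def using True by simp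
      moreover have "blk_rb A n nb (\<lambda>a i j. of_nat (d a) * Oc a i j) w a i j = (\<Sum>j'<nb a. of_nat (d a) * Oc a j j' * w a i j')"
        unfolding blk_rb_def using True by simp
      ultimately show ?thesis by simp
    next
      case False
      then show ?thesis unfolding Winv[OF that] op_rb_embed WE blk_rb_def by (simp only: if_not_P[OF False] if_False)
    qed
  qed
  have blk_r_resc: "blk_r A n nb (\<lambda>a i j. of_nat (d a) * (M a i j / of_nat (d a))) w = blk_r A n nb M w" for M w
  proof -
    have "of_nat (d a) * (M a i j / of_nat (d a)) = M a i j" if "a \<in> A" for a i j
      using dpos that by simp
    then show ?thesis unfolding blk_r_def by (intro ext) (simp cong: sum.cong)
  qed
  have blk_rb_resc: "blk_rb A n nb (\<lambda>a i j. of_nat (d a) * (M a i j / of_nat (d a))) w = blk_rb A n nb M w" for M w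
  proof -
    have "of_nat (d a) * (M a i j / of_nat (d a)) = M a i j" if "a \<in> A" for a i j
      using dpos that by simp
    then show ?thesis unfolding blk_rb_def by (intro ext) (simp cong: sum.cong)
  qed
  have set_r: "(\<lambda>X. restrict (W \<circ> X \<circ> Winv) (Tsp A n nb)) ` Atil_r A d n nb
       = (\<lambda>M. restrict (blk_r A n nb M) (Tsp A n nb)) ` UNIV"
  proof
    show "(\<lambda>X. restrict (W \<circ> X \<circ> Winv) (Tsp A n nb)) ` Atil_r A d n nb
       \<subseteq> (\<lambda>M. restrict (blk_r A n nb M) (Tsp A n nb)) ` UNIV"
    proof
      fix Y assume "Y \<in> (\<lambda>X. restrict (W \<circ> X \<circ> Winv) (Tsp A n nb)) ` Atil_r A d n nb"
      then obtain Oc where Y: "Y = restrict (W \<circ> op_r A d n nb Oc \<circ> Winv) (Tsp A n nb)"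
        by (auto simp: Atil_r_def)
      have "Y = restrict (blk_r A n nb (\<lambda>a i j. of_nat (d a) * Oc a i j)) (Tsp A n nb)"
        unfolding Y by (intro restrict_ext) (simp add: conj_r)
      then show "Y \<in> (\<lambda>M. restrict (blk_r A n nb M) (Tsp A n nb)) ` UNIV" by blast
    qed
    show "(\<lambda>M. restrict (blk_r A n nb M) (Tsp A n nb)) ` UNIV
       \<subseteq> (\<lambda>X. restrict (W \<circ> X \<circ> Winv) (Tsp A n nb)) ` Atil_r A d n nb"
    proof
      fix Y assume "Y \<in> (\<lambda>M. restrict (blk_r A n nb M) (Tsp A n nb)) ` UNIV"
      then obtain M where Y: "Y = restrict (blk_r A n nb M) (Tsp A n nb)" by auto
      have "Y = restrict (W \<circ> op_r A d n nb (\<lambda>a i j. M a i j / of_nat (d a)) \<circ> Winv) (Tsp A n nb)"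
        unfolding Y by (intro restrict_ext) (simp only: comp_def conj_r blk_r_resc)
      then show "Y \<in> (\<lambda>X. restrict (W \<circ> X \<circ> Winv) (Tsp A n nb)) ` Atil_r A d n nb"
        by (auto simp: Atil_r_def)
    qed
  qed
  have set_rb: "(\<lambda>X. restrict (W \<circ> X \<circ> Winv) (Tsp A n nb)) ` Atil_rb A d n nb
       = (\<lambda>M. restrict (blk_rb A n nb M) (Tsp A n nb)) ` UNIV"
  proof
    show "(\<lambda>X. restrict (W \<circ> X \<circ> Winv) (Tsp A n nb)) ` Atil_rb A d n nb
       \<subseteq> (\<lambda>M. restrict (blk_rb A n nb M) (Tsp A n nb)) ` UNIV"
    proof
      fix Y assume "Y \<in> (\<lambda>X. restrict (W \<circ> X \<circ> Winv) (Tsp A n nb)) ` Atil_rb A d n nb"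
      then obtain Oc where Y: "Y = restrict (W \<circ> op_rb A d n nb Oc \<circ> Winv) (Tsp A n nb)"
        by (auto simp: Atil_rb_def)
      have "Y = restrict (blk_rb A n nb (\<lambda>a i j. of_nat (d a) * Oc a i j)) (Tsp A n nb)"
        unfolding Y by (intro restrict_ext) (simp add: conj_rb)
      then show "Y \<in> (\<lambda>M. restrict (blk_rb A n nb M) (Tsp A n nb)) ` UNIV" by blast
    qed
    show "(\<lambda>M. restrict (blk_rb A n nb M) (Tsp A n nb)) ` UNIV
       \<subseteq> (\<lambda>X. restrict (W \<circ> X \<circ> Winv) (Tsp A n nb)) ` Atil_rb A d n nb"
    proof
      fix Y assume "Y \<in> (\<lambda>M. restrict (blk_rb A n nb M) (Tsp A n nb)) ` UNIV"
      then obtain M where Y: "Y = restrict (blk_rb A n nb M) (Tsp A n nb)" by auto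
      have "Y = restrict (W \<circ> op_rb A d n nb (\<lambda>a i j. M a i j / of_nat (d a)) \<circ> Winv) (Tsp A n nb)"
        unfolding Y by (intro restrict_ext) (simp only: comp_def conj_rb blk_rb_resc)
      then show "Y \<in> (\<lambda>X. restrict (W \<circ> X \<circ> Winv) (Tsp A n nb)) ` Atil_rb A d n nb"
        by (auto simp: Atil_rb_def)
    qed
  qed
  show ?thesis
    apply (intro conjI)
    subgoal by (intro allI, rule WE)
    subgoal by (rule injW)
    subgoal by (rule img)
    subgoal using inner by blast
    subgoal using pres_r by blast
    subgoal using pres_rb by blast
    subgoal by (rule set_r)
    subgoal by (rule set_rb)
    subgoal using conj_r by blast
    done
qed

end
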